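(* Let $\mathcal{X}\in\mathbb{R}^{n_1\times\cdots\times n_D}$, and for each $d\in\{1,\dots,D\}$ let $\{w_{d,ij}\}_{1\le i<j\le n_d}$ be nonnegative weights such that for any pair $i<j$ in $\{1,\dots,n_d\}$ there is a sequence of indices $i\to k\to\cdots\to l\to j$ along which the weights $w_{d,ik},\dots,w_{d,lj}$ are all positive. For $\gamma\ge0$ let $$F_\gamma(\mathcal{U})=\frac12\|\mathcal{X}-\mathcal{U}\|_F^2+\gamma\sum_{d=1}^D\sum_{1\le i<j\le n_d} w_{d,ij}\,\|\mathcal{U}\times_d\Delta_{d,ij}\|_F .$$ Then for all sufficiently large $\gamma$, $F_\gamma$ is minimized by the grand mean tensor $\overline{\mathcal{X}}$, the tensor all of whose entries equal the average of all $n=\prod_d n_d$ entries of $\mathcal{X}$.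
   Context: Weights are symmetric ($w_{d,ij}=w_{d,ji}$). $\|\cdot\|_F$ is the Frobenius norm. $\mathcal{U}\times_d B$ is the $d$-mode product: $(\mathcal{U}\times_d B)_{i_1\ldots j\ldots i_D}=\sum_{i_d}u_{i_1\ldots i_D}b_{j i_d}$. $\Delta_{d,ij}=e_i^\top-e_j^\top\in\mathbb{R}^{1\times n_d}$, with $e_i$ the standard basis vectors of $\mathbb{R}^{n_d}$; so $\mathcal{U}\times_d\Delta_{d,ij}$ is the difference of the $i$th and $j$th mode-$d$ subarrays of $\mathcal{U}$. *)

theory Defs
  imports Complex_Main "HOL-Library.FuncSet"
begin

text \<open>Tensors of order D with mode sizes n 0, ..., n (D-1) (0-based indices).
  A tensor is a real function on multi-indices; only its values on
  tensor_idx D n matter.\<close>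

definition tensor_idx :: "nat \<Rightarrow> (nat \<Rightarrow> nat) \<Rightarrow> (nat \<Rightarrow> nat) set" where
  "tensor_idx D n = PiE {..<D} (\<lambda>d. {..<n d})"

definition frob_sq :: "nat \<Rightarrow> (nat \<Rightarrow> nat) \<Rightarrow> ((nat \<Rightarrow> nat) \<Rightarrow> real) \<Rightarrow> real" where
  "frob_sq D n U = (\<Sum>idx\<in>tensor_idx D n. (U idx)\<^sup>2)"

text \<open>Frobenius norm of U \<times>_d \<Delta>_{d,ij}: the difference of the i-th and j-th
  mode-d subarrays, i.e. entries U(idx[d:=i]) - U(idx[d:=j]) over all
  multi-indices idx with idx d = i.\<close>
definition mode_diff_norm ::
  "nat \<Rightarrow> (nat \<Rightarrow> nat) \<Rightarrow> ((nat \<Rightarrow> nat) \<Rightarrow> real) \<Rightarrow> nat \<Rightarrow> nat \<Rightarrow> nat \<Rightarrow> real" where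
  "mode_diff_norm D n U d i j =
     sqrt (\<Sum>idx\<in>{idx\<in>tensor_idx D n. idx d = i}. (U idx - U (idx(d := j)))\<^sup>2)"

definition F_obj ::
  "nat \<Rightarrow> (nat \<Rightarrow> nat) \<Rightarrow> (nat \<Rightarrow> nat \<Rightarrow> nat \<Rightarrow> real) \<Rightarrow> ((nat \<Rightarrow> nat) \<Rightarrow> real)
     \<Rightarrow> real \<Rightarrow> ((nat \<Rightarrow> nat) \<Rightarrow> real) \<Rightarrow> real" where
  "F_obj D n w X \<gamma> U =
     frob_sq D n (\<lambda>idx. X idx - U idx) / 2
     + \<gamma> * (\<Sum>d<D. \<Sum>j<n d. \<Sum>i<j. w d i j * mode_diff_norm D n U d i j)"

definition grand_mean :: "nat \<Rightarrow> (nat \<Rightarrow> nat) \<Rightarrow> ((nat \<Rightarrow> nat) \<Rightarrow> real) \<Rightarrow> ((nat \<Rightarrow> nat) \<Rightarrow> real)" where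
  "grand_mean D n X = (\<lambda>_. (\<Sum>idx\<in>tensor_idx D n. X idx) / real (\<Prod>d<D. n d))"

definition pos_edges :: "(nat \<Rightarrow> nat) \<Rightarrow> (nat \<Rightarrow> nat \<Rightarrow> nat \<Rightarrow> real) \<Rightarrow> nat \<Rightarrow> (nat \<times> nat) set" where
  "pos_edges n w d = {(a, b). a < n d \<and> b < n d \<and> a \<noteq> b \<and> w d a b > 0}"

end

theory Submission
  imports Defs
begin

definition penP :: "nat \<Rightarrow> (nat \<Rightarrow> nat) \<Rightarrow> (nat \<Rightarrow> nat \<Rightarrow> nat \<Rightarrow> real) \<Rightarrow> ((nat \<Rightarrow> nat) \<Rightarrow> real) \<Rightarrow> real" where
  "penP D n w U = (\<Sum>d<D. \<Sum>j<n d. \<Sum>i<j. w d i j * mode_diff_norm D n U d i j)"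

definition relK :: "nat \<Rightarrow> (nat \<Rightarrow> nat) \<Rightarrow> (nat \<Rightarrow> nat \<Rightarrow> nat \<Rightarrow> real) \<Rightarrow> (nat \<Rightarrow> nat) \<Rightarrow> (nat \<Rightarrow> nat) \<Rightarrow> bool" where
  "relK D n w a b = (\<exists>K\<ge>0. \<forall>U. \<bar>U a - U b\<bar> \<le> K * penP D n w U)"

lemma finite_T: "finite (tensor_idx D n)"
  unfolding tensor_idx_def by (rule finite_PiE) auto

lemma mdn_nonneg: "0 \<le> mode_diff_norm D n U d i j"
  unfolding mode_diff_norm_def by (auto intro: sum_nonneg)

lemma mdn_ge:
  assumes "a \<in> tensor_idx D n" "a d = i"
  shows "\<bar>U a - U (a(d := j))\<bar> \<le> mode_diff_norm D n U d i j"
proof -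
  have fin: "finite {idx\<in>tensor_idx D n. idx d = i}" using finite_T by auto
  have "(U a - U (a(d := j)))\<^sup>2 \<le> (\<Sum>idx\<in>{idx\<in>tensor_idx D n. idx d = i}. (U idx - U (idx(d := j)))\<^sup>2)"
    by (rule member_le_sum[OF _ _ fin, where f = "\<lambda>idx. (U idx - U (idx(d := j)))\<^sup>2"]) (use assms in auto)
  then have "sqrt ((U a - U (a(d := j)))\<^sup>2) \<le> mode_diff_norm D n U d i j"
    unfolding mode_diff_norm_def using real_sqrt_le_mono by blast
  then show ?thesis by simp
qed

lemma P_nonneg:
  assumes nonneg: "\<forall>d<D. \<forall>j<n d. \<forall>i<j. 0 \<le> w d i j"
  shows "0 \<le> penP D n w U"
  unfolding penP_def using nonneg mdn_nonneg
  by (intro sum_nonneg) (auto intro!: mult_nonneg_nonneg)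

lemma P_ge:
  assumes nonneg: "\<forall>d<D. \<forall>j<n d. \<forall>i<j. 0 \<le> w d i j"
    and "d < D" "i < j" "j < n d"
  shows "w d i j * mode_diff_norm D n U d i j \<le> penP D n w U"
proof -
  let ?m = "mode_diff_norm D n U"
  have h1: "w d i j * ?m d i j \<le> (\<Sum>i'<j. w d i' j * ?m d i' j)"
    by (rule member_le_sum[where f="\<lambda>i'. w d i' j * ?m d i' j"])
       (use assms mdn_nonneg in auto)
  have h2: "(\<Sum>i'<j. w d i' j * ?m d i' j) \<le> (\<Sum>j'<n d. \<Sum>i'<j'. w d i' j' * ?m d i' j')"
    by (rule member_le_sum[where f="\<lambda>j'. \<Sum>i'<j'. w d i' j' * ?m d i' j'"])
       (use assms mdn_nonneg in \<open>auto intro!: sum_nonneg\<close>)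
  have h3: "(\<Sum>j'<n d. \<Sum>i'<j'. w d i' j' * ?m d i' j') \<le> penP D n w U"
    unfolding penP_def
    by (rule member_le_sum[where f="\<lambda>d. \<Sum>j'<n d. \<Sum>i'<j'. w d i' j' * ?m d i' j'"])
       (use assms mdn_nonneg in \<open>auto intro!: sum_nonneg\<close>)
  show ?thesis using h1 h2 h3 by linarith
qed

lemma relK_refl: "relK D n w a a"
  unfolding relK_def by (rule exI[of _ 0]) auto

lemma relK_sym: "relK D n w a b \<Longrightarrow> relK D n w b a"
  unfolding relK_def by (metis abs_minus_commute)

lemma relK_trans:
  assumes "relK D n w a b" "relK D n w b c"
  shows "relK D n w a c"
proof -
  obtain K1 where K1: "K1 \<ge> 0" "\<forall>U. \<bar>U a - U b\<bar> \<le> K1 * penP D n w U"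
    using assms(1) unfolding relK_def by blast
  obtain K2 where K2: "K2 \<ge> 0" "\<forall>U. \<bar>U b - U c\<bar> \<le> K2 * penP D n w U"
    using assms(2) unfolding relK_def by blast
  show ?thesis unfolding relK_def
  proof (intro exI[of _ "K1 + K2"] conjI allI)
    fix U :: "(nat \<Rightarrow> nat) \<Rightarrow> real"
    have "\<bar>U a - U c\<bar> \<le> \<bar>U a - U b\<bar> + \<bar>U b - U c\<bar>" by linarith
    also have "\<dots> \<le> K1 * penP D n w U + K2 * penP D n w U" using K1 K2 by (meson add_mono)
    finally show "\<bar>U a - U c\<bar> \<le> (K1 + K2) * penP D n w U" by (simp add: distrib_right)
  qed (use K1 K2 in auto)
qed

lemma T_upd:
  assumes "a \<in> tensor_idx D n" "d < D" "k < n d"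
  shows "a(d := k) \<in> tensor_idx D n"
  using assms unfolding tensor_idx_def by (auto simp: PiE_iff extensional_def)

lemma T_lt:
  assumes "a \<in> tensor_idx D n" "d < D"
  shows "a d < n d"
  using assms unfolding tensor_idx_def by (auto simp: PiE_iff)

lemma relK_step:
  assumes nonneg: "\<forall>d<D. \<forall>j<n d. \<forall>i<j. 0 \<le> w d i j"
    and sym: "\<forall>d<D. \<forall>i<n d. \<forall>j<n d. w d i j = w d j i"
    and a: "a \<in> tensor_idx D n" and d: "d < D" and e: "(a d, j) \<in> pos_edges n w d"
  shows "relK D n w a (a(d := j))"
proof -
  have j: "j < n d" and ad: "a d < n d" and ne: "a d \<noteq> j" and wp: "w d (a d) j > 0"
    using e unfolding pos_edges_def by auto
  show ?thesis
  proof (cases "a d < j")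
    case True
    show ?thesis unfolding relK_def
    proof (intro exI[of _ "1 / w d (a d) j"] conjI allI)
      fix U :: "(nat \<Rightarrow> nat) \<Rightarrow> real"
      have "\<bar>U a - U (a(d := j))\<bar> \<le> mode_diff_norm D n U d (a d) j"
        by (rule mdn_ge[OF a]) simp
      also have "\<dots> = (w d (a d) j * mode_diff_norm D n U d (a d) j) / w d (a d) j"
        using wp by simp
      also have "\<dots> \<le> penP D n w U / w d (a d) j"
        by (rule divide_right_mono[OF P_ge[OF nonneg d True j]]) (use wp in simp)
      finally show "\<bar>U a - U (a(d := j))\<bar> \<le> 1 / w d (a d) j * penP D n w U" by simp
    qed (use wp in simp)
  next
    case False
    then have lt: "j < a d" using ne by simp
    let ?b = "a(d := j)"
    have b: "?b \<in> tensor_idx D n" using T_upd[OF a d j] .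
    have wp2: "w d j (a d) > 0" using sym d ad j wp by metis
    have bb: "?b(d := a d) = a" by simp
    show ?thesis unfolding relK_def
    proof (intro exI[of _ "1 / w d j (a d)"] conjI allI)
      fix U :: "(nat \<Rightarrow> nat) \<Rightarrow> real"
      have "\<bar>U ?b - U (?b(d := a d))\<bar> \<le> mode_diff_norm D n U d j (a d)"
        by (rule mdn_ge[OF b]) simp
      then have "\<bar>U a - U ?b\<bar> \<le> mode_diff_norm D n U d j (a d)"
        by (simp only: bb abs_minus_commute)
      also have "\<dots> = (w d j (a d) * mode_diff_norm D n U d j (a d)) / w d j (a d)"
        using wp2 by simp
      also have "\<dots> \<le> penP D n w U / w d j (a d)"
        by (rule divide_right_mono[OF P_ge[OF nonneg d lt ad]]) (use wp2 in simp)
      finally show "\<bar>U a - U ?b\<bar> \<le> 1 / w d j (a d) * penP D n w U" by simp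
    qed (use wp2 in simp)
  qed
qed

lemma relK_trancl:
  assumes nonneg: "\<forall>d<D. \<forall>j<n d. \<forall>i<j. 0 \<le> w d i j"
    and sym: "\<forall>d<D. \<forall>i<n d. \<forall>j<n d. w d i j = w d j i"
    and d: "d < D"
  shows "(x, j) \<in> (pos_edges n w d)\<^sup>+ \<Longrightarrow> a \<in> tensor_idx D n \<Longrightarrow> a d = x \<Longrightarrow> relK D n w a (a(d := j))"
proof (induction rule: trancl_induct)
  case (base y)
  then show ?case using relK_step[OF nonneg sym base(2) d] base(1,3) by blast
next
  case (step y z)
  have y: "y < n d" using step(2) unfolding pos_edges_def by auto
  have ay: "a(d := y) \<in> tensor_idx D n" using T_upd[OF step(4) d y] .
  have "relK D n w (a(d := y)) ((a(d := y))(d := z))"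
    using relK_step[OF nonneg sym ay d] step(2) by simp
  then have "relK D n w (a(d := y)) (a(d := z))" by simp
  then show ?case using relK_trans step by blast
qed

lemma relK_coord:
  assumes nonneg: "\<forall>d<D. \<forall>j<n d. \<forall>i<j. 0 \<le> w d i j"
    and sym: "\<forall>d<D. \<forall>i<n d. \<forall>j<n d. w d i j = w d j i"
    and connected: "\<forall>d<D. \<forall>j<n d. \<forall>i<j. (i, j) \<in> (pos_edges n w d)\<^sup>+"
    and a: "a \<in> tensor_idx D n" and d: "d < D" and k: "k < n d"
  shows "relK D n w a (a(d := k))"
proof -
  have ad: "a d < n d" using T_lt[OF a d] .
  consider "k = a d" | "a d < k" | "k < a d" by linarith
  then show ?thesis
  proof cases
    case 1 then show ?thesis using relK_refl by simp
  next
    case 2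
    then show ?thesis using relK_trancl[OF nonneg sym d _ a] connected d k by blast
  next
    case 3
    let ?a = "a(d := k)"
    have a': "?a \<in> tensor_idx D n" using T_upd[OF a d k] .
    have kk: "(k, a d) \<in> (pos_edges n w d)\<^sup>+" using connected d ad 3 by blast
    have "relK D n w ?a (?a(d := a d))" by (rule relK_trancl[OF nonneg sym d kk a']) simp
    then show ?thesis using relK_sym by simp
  qed
qed

lemma relK_all:
  assumes nonneg: "\<forall>d<D. \<forall>j<n d. \<forall>i<j. 0 \<le> w d i j"
    and sym: "\<forall>d<D. \<forall>i<n d. \<forall>j<n d. w d i j = w d j i"
    and connected: "\<forall>d<D. \<forall>j<n d. \<forall>i<j. (i, j) \<in> (pos_edges n w d)\<^sup>+"
    and a0: "a0 \<in> tensor_idx D n" and b: "b \<in> tensor_idx D n"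
  shows "relK D n w a0 b"
proof -
  define g where "g m = (\<lambda>d. if d < m then b d else a0 d)" for m
  have "g m \<in> tensor_idx D n \<and> relK D n w a0 (g m)" for m
  proof (induction m)
    case 0
    then show ?case using a0 relK_refl by (simp add: g_def)
  next
    case (Suc m)
    have eq: "g (Suc m) = (g m)(m := b m)" by (auto simp: g_def)
    show ?case
    proof (cases "m < D")
      case True
      have bm: "b m < n m" using T_lt[OF b True] .
      have "relK D n w (g m) (g (Suc m))"
        unfolding eq using relK_coord[OF nonneg sym connected _ True bm] Suc by blast
      moreover have "g (Suc m) \<in> tensor_idx D n" unfolding eq using T_upd[of "g m" D n m "b m"] True bm Suc by blast
      ultimately show ?thesis using relK_trans Suc by blast
    next
      case False
      have "b m = a0 m" using a0 b False unfolding tensor_idx_def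
        by (auto simp: PiE_iff extensional_def)
      then have "g (Suc m) = g m" unfolding eq by (auto simp: g_def)
      then show ?thesis using Suc by simp
    qed
  qed
  moreover have "g D = b" using a0 b unfolding g_def tensor_idx_def
    by (auto simp: PiE_iff extensional_def)
  ultimately show ?thesis by metis
qed

theorem proposition4p3:
  fixes D :: nat and n :: "nat \<Rightarrow> nat"
    and w :: "nat \<Rightarrow> nat \<Rightarrow> nat \<Rightarrow> real"
    and X :: "(nat \<Rightarrow> nat) \<Rightarrow> real"
  assumes sizes: "\<forall>d<D. 1 \<le> n d"
    and sym: "\<forall>d<D. \<forall>i<n d. \<forall>j<n d. w d i j = w d j i"
    and nonneg: "\<forall>d<D. \<forall>j<n d. \<forall>i<j. 0 \<le> w d i j"
    and connected: "\<forall>d<D. \<forall>j<n d. \<forall>i<j. (i, j) \<in> (pos_edges n w d)\<^sup>+"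
  shows "\<exists>\<gamma>0. \<forall>\<gamma>\<ge>\<gamma>0. \<forall>U.
           F_obj D n w X \<gamma> (grand_mean D n X) \<le> F_obj D n w X \<gamma> U"
proof -
  define T where "T = tensor_idx D n"
  have finT: "finite T" unfolding T_def by (rule finite_T)
  define a0 where "a0 = (\<lambda>d. if d < D then (0::nat) else undefined)"
  have a0: "a0 \<in> T" unfolding T_def tensor_idx_def a0_def using sizes
    by (auto simp: PiE_iff extensional_def)
  have "\<forall>idx\<in>T. \<exists>K. K \<ge> 0 \<and> (\<forall>U. \<bar>U idx - U a0\<bar> \<le> K * penP D n w U)"
  proof
    fix idx assume "idx \<in> T"
    then have "relK D n w idx a0"
      using relK_all[OF nonneg sym connected] a0 unfolding T_def by blast
    then show "\<exists>K. K \<ge> 0 \<and> (\<forall>U. \<bar>U idx - U a0\<bar> \<le> K * penP D n w U)"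
      unfolding relK_def by blast
  qed
  then obtain Kf where Kf: "\<And>idx. idx \<in> T \<Longrightarrow> Kf idx \<ge> 0"
    "\<And>idx U. idx \<in> T \<Longrightarrow> \<bar>U idx - U a0\<bar> \<le> Kf idx * penP D n w U"
    by metis
  define c where "c = (\<Sum>idx\<in>T. X idx) / real (\<Prod>d<D. n d)"
  define e where "e idx = X idx - c" for idx
  have cardT: "card T = (\<Prod>d<D. n d)" unfolding T_def tensor_idx_def
    by (simp add: card_PiE)
  have cardpos: "(\<Prod>d<D. n d) > 0" using sizes by (auto intro: prod_pos)
  have sume: "(\<Sum>idx\<in>T. e idx) = 0"
    unfolding e_def using cardT cardpos by (simp add: sum_subtractf c_def)
  define \<gamma>0 where "\<gamma>0 = (\<Sum>idx\<in>T. \<bar>e idx\<bar> * Kf idx)"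
  have gm: "grand_mean D n X = (\<lambda>_. c)" unfolding grand_mean_def c_def T_def by simp
  have FC: "F_obj D n w X \<gamma> (grand_mean D n X) = (\<Sum>idx\<in>T. (e idx)\<^sup>2) / 2" for \<gamma>
    unfolding F_obj_def gm frob_sq_def mode_diff_norm_def e_def T_def by simp
  show ?thesis
  proof (intro exI[of _ \<gamma>0] allI impI)
    fix \<gamma> :: real and U :: "(nat \<Rightarrow> nat) \<Rightarrow> real"
    assume g: "\<gamma> \<ge> \<gamma>0"
    let ?P = "penP D n w U"
    have Pn: "?P \<ge> 0" using P_nonneg[OF nonneg] .
    have pw: "(X idx - U idx)\<^sup>2 \<ge> (e idx)\<^sup>2 - 2 * (e idx * (U idx - U a0)) - 2 * ((U a0 - c) * e idx)" for idx
    proof -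
      have "(X idx - U idx)\<^sup>2 = (e idx)\<^sup>2 - 2 * (e idx * (U idx - U a0)) - 2 * ((U a0 - c) * e idx) + (U idx - c)\<^sup>2"
        unfolding e_def by (simp add: power2_eq_square algebra_simps)
      then show ?thesis by simp
    qed
    have s1: "(\<Sum>idx\<in>T. (X idx - U idx)\<^sup>2) \<ge> (\<Sum>idx\<in>T. (e idx)\<^sup>2) - 2 * (\<Sum>idx\<in>T. e idx * (U idx - U a0)) - 2 * ((U a0 - c) * (\<Sum>idx\<in>T. e idx))"
    proof -
      have "(\<Sum>idx\<in>T. (e idx)\<^sup>2 - 2 * (e idx * (U idx - U a0)) - 2 * ((U a0 - c) * e idx)) \<le> (\<Sum>idx\<in>T. (X idx - U idx)\<^sup>2)"
        by (rule sum_mono) (rule pw)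
      then show ?thesis by (simp add: sum_subtractf sum_distrib_left)
    qed
    have s2: "(\<Sum>idx\<in>T. e idx * (U idx - U a0)) \<le> \<gamma>0 * ?P"
    proof -
      have "(\<Sum>idx\<in>T. e idx * (U idx - U a0)) \<le> (\<Sum>idx\<in>T. \<bar>e idx\<bar> * Kf idx * ?P)"
      proof (rule sum_mono)
        fix idx assume i: "idx \<in> T"
        have "e idx * (U idx - U a0) \<le> \<bar>e idx\<bar> * \<bar>U idx - U a0\<bar>" by (simp add: abs_mult[symmetric])
        also have "\<dots> \<le> \<bar>e idx\<bar> * (Kf idx * ?P)" by (rule mult_left_mono[OF Kf(2)[OF i]]) simp
        finally show "e idx * (U idx - U a0) \<le> \<bar>e idx\<bar> * Kf idx * ?P" by simp
      qed
      then show ?thesis unfolding \<gamma>0_def by (simp add: sum_distrib_right)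
    qed
    have s3: "\<gamma>0 * ?P \<le> \<gamma> * ?P" using g Pn by (rule mult_right_mono)
    have FU: "F_obj D n w X \<gamma> U = (\<Sum>idx\<in>T. (X idx - U idx)\<^sup>2) / 2 + \<gamma> * ?P"
      unfolding F_obj_def frob_sq_def penP_def T_def by simp
    show "F_obj D n w X \<gamma> (grand_mean D n X) \<le> F_obj D n w X \<gamma> U"
      unfolding FC FU using s1 s2 s3 sume by simp
  qed
qed

end
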